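(* Let $A,B\in\mathbb{C}^{n\times n}$ and let $C=A+B$. Then \[|\Lambda(C)|\leq(\operatorname{rank}(B)+1)\,|\Lambda(A)|+d(A)-d(C).\]
   Context: For $M\in\mathbb{C}^{n\times n}$, $\Lambda(M)$ denotes the set of distinct eigenvalues of $M$ and $|\cdot|$ the cardinality of a set. For $\lambda\in\Lambda(M)$, $m_a(M,\lambda)$ is its algebraic multiplicity (multiplicity as a root of the characteristic polynomial) and $m_g(M,\lambda)$ its geometric multiplicity (dimension of the eigenspace). The defectivity of $M$ is $d(M):=\sum_{\lambda\in\Lambda(M)}\big(m_a(M,\lambda)-m_g(M,\lambda)\big)$. *)

theory Defs
  imports "Jordan_Normal_Form.Jordan_Normal_Form_Uniqueness" "Jordan_Normal_Form.DL_Rank"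
begin

definition spec :: "complex mat \<Rightarrow> complex set" where
  "spec M = {x. eigenvalue M x}"

definition alg_mult :: "complex mat \<Rightarrow> complex \<Rightarrow> nat" where
  "alg_mult M x = Polynomial.order x (char_poly M)"

definition geo_mult :: "complex mat \<Rightarrow> complex \<Rightarrow> nat" where
  "geo_mult M x = kernel_dim (char_matrix M x)"

definition defectivity :: "complex mat \<Rightarrow> int" where
  "defectivity M = (\<Sum>x\<in>spec M. int (alg_mult M x) - int (geo_mult M x))"

end

theory Submission
  imports Defs
begin


lemma (in vectorspace) subspace_fin_dim:
  assumes fd: "fin_dim" and X: "subspace K X V"
  shows "vectorspace.fin_dim K (vs X)"
proof -
  have vX: "vectorspace K (vs X)" using X subspace_is_vs by blast
  have subm: "submodule K X V" using X by (simp add: subspace_def)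
  let ?P = "\<lambda>S. S \<subseteq> carrier (vs X) \<and> \<not> LinearCombinations.module.lin_dep K (vs X) S"
  have bnd: "finite S \<and> card S \<le> dim" if "?P S" for S
  proof -
    have SX: "S \<subseteq> X" using that by simp
    have "lin_indpt S" using that span_li_not_depend(2)[OF SX subm] by simp
    moreover have "S \<subseteq> carrier V" using SX subm unfolding submodule_def by blast
    ultimately show ?thesis using li_le_dim[OF fd] by blast
  qed
  have "?P {}"
  proof -
    interpret X': vectorspace K "vs X" by (rule vX)
    show ?thesis by (simp add: X'.lin_dep_def)
  qed
  from maximal_exists[of ?P dim, OF bnd this]
  obtain A where A: "finite A" "maximal A ?P" by blast
  hence "LinearCombinations.module.gen_set K (vs X) A" using vectorspace.max_li_is_gen[OF vX] by blast
  moreover have "A \<subseteq> carrier (vs X)" using A unfolding maximal_def by blast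
  ultimately show ?thesis using A(1) unfolding vectorspace.fin_dim_def[OF vX] by blast
qed

lemma (in vectorspace) subspace_dim_mono:
  assumes fd: "fin_dim" and X: "subspace K X V" and Y: "subspace K Y V" and XY: "X \<subseteq> Y"
  shows "vectorspace.dim K (vs X) \<le> vectorspace.dim K (vs Y)"
proof -
  have vY: "vectorspace K (vs Y)" using Y subspace_is_vs by blast
  have "subspace K X (vs Y)" using nested_subspaces[OF Y X XY] .
  from vectorspace.subspace_dim[OF vY this] subspace_fin_dim[OF fd Y] subspace_fin_dim[OF fd X]
  show ?thesis by simp
qed



lemma mat_kernel_subspace:
  fixes A :: "'a::field mat"
  assumes A: "A \<in> carrier_mat nr n"
  shows "subspace class_ring (mat_kernel A) (module_vec TYPE('a) n)"
proof -
  interpret V: vec_space "TYPE('a)" n .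
  have z: "A *\<^sub>v 0\<^sub>v n = 0\<^sub>v nr"
    by (rule eq_vecI, insert A, auto simp: scalar_prod_def)
  show ?thesis
    unfolding subspace_def submodule_def
    using V.vectorspace_axioms z vectorspace_def mat_kernel[OF A]
      mult_add_distrib_mat_vec[OF A] mult_mat_vec[OF A]
    by (auto simp: class_ring_simps)
qed

lemma kernel_dim_add_le:
  fixes X B :: "'a::field mat"
  assumes X: "X \<in> carrier_mat n n" and B: "B \<in> carrier_mat n n"
  shows "kernel_dim X \<le> kernel_dim (X + B) + vec_space.rank n B"
proof -
  interpret V: vec_space "TYPE('a)" n .
  interpret KX: kernel n n X by unfold_locales (rule X)
  have XB: "X + B \<in> carrier_mat n n" using X B by simp
  interpret KY: kernel n n "X + B" by unfold_locales (rule XB)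
  define T where "T = (\<lambda>v. B *\<^sub>v v)"
  have lm: "linear_map class_ring KX.VK V.V T"
  proof (unfold_locales)
    show "T \<in> module_hom class_ring KX.VK V.V"
      unfolding module_hom_def T_def using B mat_kernel[OF X] mult_add_distrib_mat_vec[OF B] mult_mat_vec[OF B]
      by (auto simp: class_ring_simps)
  qed
  interpret L: linear_map class_ring KX.VK V.V T by (rule lm)
  obtain bs where bs: "finite bs" "KX.basis bs" using kernel_basis_exists[OF X] by auto
  have fdX: "KX.Ker.fin_dim" using bs unfolding KX.Ker.fin_dim_def KX.Ker.basis_def by auto
  have rn: "vectorspace.dim class_ring (V.vs L.imT) + vectorspace.dim class_ring (KX.Ker.vs L.kerT) = kernel_dim X"
    using L.rank_nullity_main(1)[OF fdX] by simp
  have im_eq: "L.imT = T ` mat_kernel X" by (simp add: L.im_def)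
  have imT: "L.imT \<subseteq> V.span (set (cols B))"
    using V.col_space_eq[OF B] unfolding im_eq unfolding V.col_space_def T_def using B mat_kernel[OF X] by auto
  have d1: "vectorspace.dim class_ring (V.vs L.imT) \<le> vec_space.rank n B"
    unfolding V.rank_def
    apply (rule V.subspace_dim_mono[OF V.fin_dim L.imT_is_subspace _ imT])
    apply (rule V.span_is_subspace) using B cols_dim[of B] by auto
  have kerT: "L.kerT = mat_kernel X \<inter> mat_kernel B"
    unfolding L.ker_def unfolding T_def using mat_kernel[OF X] mat_kernel[OF B] by auto
  have sub: "subspace class_ring (mat_kernel X \<inter> mat_kernel B) V.V"
    using mat_kernel_subspace[OF X] mat_kernel_subspace[OF B]
    unfolding subspace_def submodule_def by auto
  have d2: "vectorspace.dim class_ring (KX.Ker.vs L.kerT) \<le> kernel_dim (X + B)"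
    unfolding kerT KY.kernel_dim
    apply simp
    apply (rule V.subspace_dim_mono[OF V.fin_dim sub mat_kernel_subspace[OF XB]])
    using mat_kernel[OF X] mat_kernel[OF B] mat_kernel[OF XB] add_mult_distrib_mat_vec[OF X B]
    by auto
  show ?thesis using rn d1 d2 by linarith
qed



lemma rank_nullity_mat:
  fixes M :: "'a::field mat"
  assumes M: "M \<in> carrier_mat n n"
  shows "vec_space.rank n M + kernel_dim M = n"
proof -
  interpret V: vec_space "TYPE('a)" n .
  interpret KM: kernel n n M by unfold_locales (rule M)
  define T where "T = (\<lambda>v. M *\<^sub>v v)"
  have lm: "linear_map class_ring V.V V.V T"
  proof (unfold_locales)
    show "T \<in> module_hom class_ring V.V V.V"
      unfolding module_hom_def T_def using M mult_add_distrib_mat_vec[OF M] mult_mat_vec[OF M]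
      by (auto simp: class_ring_simps)
  qed
  interpret L: linear_map class_ring V.V V.V T by (rule lm)
  have rn: "vectorspace.dim class_ring (V.vs L.imT) + vectorspace.dim class_ring (V.vs L.kerT) = n"
    using L.rank_nullity_main(1)[OF V.fin_dim] V.dim_is_n by simp
  have im_eq: "L.imT = T ` carrier_vec n" by (simp add: L.im_def)
  have imT: "L.imT = V.span (set (cols M))"
    using V.col_space_eq[OF M] unfolding im_eq unfolding V.col_space_def T_def using M by auto
  have kerT: "L.kerT = mat_kernel M"
    unfolding L.ker_def unfolding T_def using mat_kernel[OF M] by auto
  show ?thesis using rn unfolding imT kerT V.rank_def KM.kernel_dim by simp
qed

lemma kernel_dim_zero_iff:
  fixes M :: "'a::field mat"
  assumes M: "M \<in> carrier_mat n n"
  shows "kernel_dim M = 0 \<longleftrightarrow> det M \<noteq> 0"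
  using rank_nullity_mat[OF M] vec_space.det_rank_iff[OF M] by auto

lemma geo_mult_zero_iff:
  assumes M: "M \<in> carrier_mat n n"
  shows "geo_mult M x = 0 \<longleftrightarrow> x \<notin> spec M"
  unfolding geo_mult_def spec_def
  using kernel_dim_zero_iff[OF char_matrix_closed[OF M]] eigenvalue_det[OF M] by auto

lemma sum_order_prod:
  fixes as :: "'a::idom list"
  assumes "finite S" "set as \<subseteq> S"
  shows "(\<Sum>x\<in>S. Polynomial.order x (\<Prod>a\<leftarrow>as. [:-a,1:])) = length as"
  using assms(2)
proof (induction as)
  case Nil
  then show ?case by (simp add: order_0I)
next
  case (Cons a as)
  have nz: "[:-a,1:] * (\<Prod>a\<leftarrow>as. [:-a,1:]) \<noteq> 0"
  proof -
    have "[:-a,1:] \<noteq> (0::'a poly)" by simp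
    moreover have "(\<Prod>a\<leftarrow>as. [:-a,1:]) \<noteq> (0::'a poly)"
      unfolding prod_list_zero_iff by auto
    ultimately show ?thesis by (rule no_zero_divisors)
  qed
  have o1: "Polynomial.order x [:-a,1:] = (if x = a then 1 else 0)" for x
    using order_power_n_n[of a 1] by (auto intro: order_0I)
  have "(\<Sum>x\<in>S. Polynomial.order x (\<Prod>a\<leftarrow>a#as. [:-a,1:]))
      = (\<Sum>x\<in>S. (if x = a then 1 else 0) + Polynomial.order x (\<Prod>a\<leftarrow>as. [:-a,1:]))"
    using order_mult[OF nz] o1 by simp
  also have "\<dots> = (\<Sum>x\<in>S. (if x = a then 1 else 0)) + length as"
    using Cons by (simp add: sum.distrib)
  also have "(\<Sum>x\<in>S. (if x = a then 1::nat else 0)) = 1"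
    using Cons.prems assms(1) by (simp add: sum.delta)
  finally show ?case by simp
qed

lemma spec_sum_alg_mult:
  assumes M: "M \<in> carrier_mat n n"
  shows "finite (spec M) \<and> (\<Sum>x\<in>spec M. alg_mult M x) = n"
proof -
  obtain as where as: "char_poly M = (\<Prod>a\<leftarrow>as. [:-a,1:])" "length as = n"
    using char_poly_factorized[OF M] by blast
  have "spec M = {x. poly (char_poly M) x = 0}"
    unfolding spec_def using eigenvalue_root_char_poly[OF M] by auto
  also have "\<dots> = set as" unfolding as(1) poly_prod_list by (auto simp: prod_list_zero_iff)
  finally have s: "spec M = set as" .
  show ?thesis unfolding alg_mult_def as(1) s using sum_order_prod[of "set as" as] as(2) by simp
qed

lemma char_matrix_add:
  assumes A: "A \<in> carrier_mat n n" and B: "B \<in> carrier_mat n n"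
  shows "char_matrix (A + B) x = char_matrix A x + B"
  unfolding char_matrix_def using A B by (intro eq_matI) auto

lemma geo_mult_le:
  assumes A: "A \<in> carrier_mat n n" and B: "B \<in> carrier_mat n n"
  shows "geo_mult A x \<le> geo_mult (A + B) x + vec_space.rank n B"
  unfolding geo_mult_def char_matrix_add[OF A B]
  by (rule kernel_dim_add_le[OF char_matrix_closed[OF A] B])



theorem theorem3p1:
  fixes A B :: "complex mat" and n :: nat
  assumes "A \<in> carrier_mat n n" and "B \<in> carrier_mat n n"
  shows "int (card (spec (A + B)))
           \<le> (int (vec_space.rank n B) + 1) * int (card (spec A))
              + defectivity A - defectivity (A + B)"
proof -
  define C where "C = A + B"
  have A: "A \<in> carrier_mat n n" and C: "C \<in> carrier_mat n n" using assms unfolding C_def by auto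
  define r where "r = int (vec_space.rank n B)"
  define La where "La = spec A"
  define Lc where "Lc = spec C"
  have fa: "finite La" and sa: "(\<Sum>x\<in>La. int (alg_mult A x)) = int n"
    using spec_sum_alg_mult[OF A] unfolding La_def by (auto simp flip: of_nat_sum)
  have fc: "finite Lc" and sc: "(\<Sum>x\<in>Lc. int (alg_mult C x)) = int n"
    using spec_sum_alg_mult[OF C] unfolding Lc_def by (auto simp flip: of_nat_sum)
  have le: "int (geo_mult A x) \<le> int (geo_mult C x) + r" for x
    using geo_mult_le[OF assms, of x] unfolding C_def r_def by simp
  have gc1: "x \<in> Lc \<Longrightarrow> int (geo_mult C x) \<ge> 1" for x
    using geo_mult_zero_iff[OF C, of x] unfolding Lc_def by simp
  have gc0: "x \<notin> Lc \<Longrightarrow> geo_mult C x = 0" for x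
    using geo_mult_zero_iff[OF C, of x] unfolding Lc_def by simp
  have dA: "defectivity A = int n - (\<Sum>x\<in>La. int (geo_mult A x))"
    unfolding defectivity_def La_def[symmetric] using sa by (simp add: sum_subtractf)
  have dC: "defectivity C = int n - (\<Sum>x\<in>Lc. int (geo_mult C x))"
    unfolding defectivity_def Lc_def[symmetric] using sc by (simp add: sum_subtractf)
  define h where "h x = (if x \<in> Lc then int (geo_mult C x) - 1 else 0)" for x
  have pt: "int (geo_mult A x) \<le> (r + 1) + h x" for x
    using le[of x] gc0[of x] unfolding h_def by auto
  have "(\<Sum>x\<in>La. int (geo_mult A x)) \<le> (\<Sum>x\<in>La. (r + 1) + h x)"
    by (rule sum_mono) (rule pt)
  also have "\<dots> = (r + 1) * int (card La) + (\<Sum>x\<in>La. h x)"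
    by (simp add: sum.distrib algebra_simps)
  also have "(\<Sum>x\<in>La. h x) = (\<Sum>x\<in>La \<inter> Lc. int (geo_mult C x) - 1)"
    unfolding h_def using fa by (simp add: sum.inter_restrict)
  also have "\<dots> \<le> (\<Sum>x\<in>Lc. int (geo_mult C x) - 1)"
    by (rule sum_mono2[OF fc]) (auto dest: gc1)
  also have "\<dots> = (\<Sum>x\<in>Lc. int (geo_mult C x)) - int (card Lc)"
    by (simp add: sum_subtractf)
  finally have main: "(\<Sum>x\<in>La. int (geo_mult A x)) \<le>
      (r + 1) * int (card La) + ((\<Sum>x\<in>Lc. int (geo_mult C x)) - int (card Lc))" by simp
  show ?thesis
    unfolding C_def[symmetric] La_def[symmetric] Lc_def[symmetric] r_def[symmetric] dA dC
    using main by simp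
qed


end
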